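(* Let $a$ be a real number and $r\ge1$. On the space of polynomials in $y=(y_1,\dots,y_r)$, define the operators $$D_j=\partial_{y_j}+\frac a2\sum_{i\ne j}\frac{1}{y_j-y_i}(1-s_{ij}),\qquad U_j=D_jy_j-\frac a2\sum_{i<j}s_{ij},$$ where $s_{ij}$ acts by interchanging the variables $y_i$ and $y_j$ and $D_jy_j$ denotes the composition of multiplication by $y_j$ followed by $D_j$. Then $$(D_1D_2\cdots D_r)(y_1y_2\cdots y_r)=U_1U_2\cdots U_r,$$ where $y_1\cdots y_r$ denotes the multiplication operator. *)

theory Defs
  imports Complex_Main "HOL-Library.Poly_Mapping"
begin

text \<open>Real polynomials in the variables y_1, y_2, ... : a monomial is an exponent
  vector (nat =>0 nat), a polynomial a finitely supported coefficient map.\<close>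
type_synonym mpoly = "(nat \<Rightarrow>\<^sub>0 nat) \<Rightarrow>\<^sub>0 real"

definition const :: "real \<Rightarrow> mpoly" where
  "const c = Poly_Mapping.single 0 c"

definition Y :: "nat \<Rightarrow> mpoly" where
  "Y i = Poly_Mapping.single (Poly_Mapping.single i 1) 1"

definition pderiv_var :: "nat \<Rightarrow> mpoly \<Rightarrow> mpoly" where
  "pderiv_var j f = (\<Sum>\<alpha>\<in>Poly_Mapping.keys f.
      Poly_Mapping.single (\<alpha> - Poly_Mapping.single j 1)
        (Poly_Mapping.lookup f \<alpha> * real (Poly_Mapping.lookup (\<alpha>::nat \<Rightarrow>\<^sub>0 nat) j)))"

definition swap_exp :: "nat \<Rightarrow> nat \<Rightarrow> (nat \<Rightarrow>\<^sub>0 nat) \<Rightarrow> (nat \<Rightarrow>\<^sub>0 nat)" where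
  "swap_exp i j \<alpha> = Abs_poly_mapping (\<lambda>k. Poly_Mapping.lookup \<alpha> (if k = i then j else if k = j then i else k))"

definition swap_var :: "nat \<Rightarrow> nat \<Rightarrow> mpoly \<Rightarrow> mpoly" where
  "swap_var i j f = (\<Sum>\<alpha>\<in>Poly_Mapping.keys f. Poly_Mapping.single (swap_exp i j \<alpha>) (Poly_Mapping.lookup f \<alpha>))"

definition divdiff :: "nat \<Rightarrow> nat \<Rightarrow> mpoly \<Rightarrow> mpoly" where
  "divdiff i j f = (THE g. (Y j - Y i) * g = f - swap_var i j f)"

definition Dop :: "real \<Rightarrow> nat \<Rightarrow> nat \<Rightarrow> mpoly \<Rightarrow> mpoly" where
  "Dop a r j f = pderiv_var j f + const (a / 2) * (\<Sum>i\<in>{1..r} - {j}. divdiff i j f)"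

definition Uop :: "real \<Rightarrow> nat \<Rightarrow> nat \<Rightarrow> mpoly \<Rightarrow> mpoly" where
  "Uop a r j f = Dop a r j (Y j * f) - const (a / 2) * (\<Sum>i\<in>{1..<j}. swap_var i j f)"

definition comp_ops :: "nat \<Rightarrow> (nat \<Rightarrow> mpoly \<Rightarrow> mpoly) \<Rightarrow> mpoly \<Rightarrow> mpoly" where
  "comp_ops r F = foldr (\<circ>) (map F [1..<r+1]) id"

end

theory Submission
  imports Defs
begin

lemma comp_ops_0: "comp_ops 0 F = id" by (simp add: comp_ops_def)

lemma foldr_comp_gen: "foldr (\<circ>) xs g = foldr (\<circ>) xs id \<circ> g"
  by (induction xs arbitrary: g) (simp_all add: o_assoc)

lemma comp_ops_Suc: "comp_ops (Suc m) F = comp_ops m F \<circ> F (Suc m)"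
proof -
  have "[1..<Suc m + 1] = [1..<m+1] @ [Suc m]" by simp
  then show ?thesis unfolding comp_ops_def
    by (simp add: foldr_comp_gen[of _ "F (Suc m)"] del: upt_Suc)
qed

lemma update_single: "a \<notin> Poly_Mapping.keys f \<Longrightarrow> Poly_Mapping.update a b f = Poly_Mapping.single a b + f"
  by (rule poly_mapping_eqI) (auto simp: lookup_update lookup_add lookup_single in_keys_iff when_def)

lemma pm_induct:
  assumes "P 0" "\<And>a b f. a \<notin> Poly_Mapping.keys f \<Longrightarrow> b \<noteq> 0 \<Longrightarrow> P f \<Longrightarrow> P (Poly_Mapping.single a b + f)"
  shows "P f"
proof (induction f rule: update_induct)
  case const then show ?case using assms(1) .
next
  case (update a b f) then show ?case using assms(2) by (simp add: update_single)
qed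

lemma sum_keys_ext:
  assumes "finite S" "Poly_Mapping.keys f \<subseteq> S" "\<And>\<alpha>. \<phi> \<alpha> 0 = 0"
  shows "(\<Sum>\<alpha>\<in>Poly_Mapping.keys f. \<phi> \<alpha> (Poly_Mapping.lookup f \<alpha>)) = (\<Sum>\<alpha>\<in>S. \<phi> \<alpha> (Poly_Mapping.lookup f \<alpha>))"
  by (rule sum.mono_neutral_left) (use assms in \<open>auto simp: in_keys_iff\<close>)

lemma lin_add:
  fixes \<phi> :: "'a \<Rightarrow> 'b::comm_monoid_add \<Rightarrow> 'c::comm_monoid_add"
  assumes "\<And>\<alpha>. \<phi> \<alpha> 0 = 0" "\<And>\<alpha> x y. \<phi> \<alpha> (x + y) = \<phi> \<alpha> x + \<phi> \<alpha> y"
  shows "(\<Sum>\<alpha>\<in>Poly_Mapping.keys (f+g). \<phi> \<alpha> (Poly_Mapping.lookup (f+g) \<alpha>))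
    = (\<Sum>\<alpha>\<in>Poly_Mapping.keys f. \<phi> \<alpha> (Poly_Mapping.lookup f \<alpha>)) + (\<Sum>\<alpha>\<in>Poly_Mapping.keys g. \<phi> \<alpha> (Poly_Mapping.lookup g \<alpha>))"
proof -
  let ?S = "Poly_Mapping.keys f \<union> Poly_Mapping.keys g"
  have "finite ?S" by simp
  have k: "Poly_Mapping.keys (f+g) \<subseteq> ?S" by (rule keys_add)
  have e1: "(\<Sum>\<alpha>\<in>Poly_Mapping.keys (f+g). \<phi> \<alpha> (Poly_Mapping.lookup (f+g) \<alpha>)) = (\<Sum>\<alpha>\<in>?S. \<phi> \<alpha> (Poly_Mapping.lookup (f+g) \<alpha>))"
    by (rule sum_keys_ext[OF \<open>finite ?S\<close> k]) (rule assms(1))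
  have e2: "(\<Sum>\<alpha>\<in>Poly_Mapping.keys f. \<phi> \<alpha> (Poly_Mapping.lookup f \<alpha>)) = (\<Sum>\<alpha>\<in>?S. \<phi> \<alpha> (Poly_Mapping.lookup f \<alpha>))"
    by (rule sum_keys_ext[OF \<open>finite ?S\<close>]) (auto simp: assms(1))
  have e3: "(\<Sum>\<alpha>\<in>Poly_Mapping.keys g. \<phi> \<alpha> (Poly_Mapping.lookup g \<alpha>)) = (\<Sum>\<alpha>\<in>?S. \<phi> \<alpha> (Poly_Mapping.lookup g \<alpha>))"
    by (rule sum_keys_ext[OF \<open>finite ?S\<close>]) (auto simp: assms(1))
  show ?thesis unfolding e1 e2 e3
    by (simp add: lookup_add assms(2) sum.distrib)
qed

lemma lin_single:
  assumes "\<phi> \<alpha> 0 = 0"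
  shows "(\<Sum>\<beta>\<in>Poly_Mapping.keys (Poly_Mapping.single \<alpha> c). \<phi> \<beta> (Poly_Mapping.lookup (Poly_Mapping.single \<alpha> c) \<beta>)) = \<phi> \<alpha> c"
  using assms by (cases "c = 0") auto

lemma pderiv_add: "pderiv_var j (f + g) = pderiv_var j f + pderiv_var j g"
  unfolding pderiv_var_def by (rule lin_add) (simp_all add: distrib_right single_add)

lemma swap_add: "swap_var i j (f + g) = swap_var i j f + swap_var i j g"
  unfolding swap_var_def by (rule lin_add) (simp_all add: single_add)

lemma pderiv_single: "pderiv_var j (Poly_Mapping.single \<alpha> c) =
   Poly_Mapping.single (\<alpha> - Poly_Mapping.single j 1) (c * real (Poly_Mapping.lookup \<alpha> j))"
  unfolding pderiv_var_def by (rule lin_single) simp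

lemma swap_single: "swap_var i j (Poly_Mapping.single \<alpha> c) = Poly_Mapping.single (swap_exp i j \<alpha>) c"
  unfolding swap_var_def by (rule lin_single) simp

lemma additive_eq:
  fixes L M :: "mpoly \<Rightarrow> mpoly"
  assumes "\<And>f g. L (f + g) = L f + L g" "\<And>f g. M (f + g) = M f + M g"
    "\<And>\<alpha> c. L (Poly_Mapping.single \<alpha> c) = M (Poly_Mapping.single \<alpha> c)"
  shows "L f = M f"
proof (induction f rule: pm_induct)
  case 1
  have "L 0 = 0" using assms(1)[of 0 0] by simp
  moreover have "M 0 = 0" using assms(2)[of 0 0] by simp
  ultimately show ?case by simp
next
  case (2 a b f) then show ?case by (simp add: assms)
qed

definition sw :: "nat \<Rightarrow> nat \<Rightarrow> nat \<Rightarrow> nat" where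
  "sw i j k = (if k = i then j else if k = j then i else k)"

lemma lookup_swap_exp: "Poly_Mapping.lookup (swap_exp i j \<alpha>) k = Poly_Mapping.lookup \<alpha> (sw i j k)"
proof -
  have "{k. Poly_Mapping.lookup \<alpha> (sw i j k) \<noteq> 0} \<subseteq> sw i j ` Poly_Mapping.keys \<alpha>"
  proof
    fix k assume "k \<in> {k. Poly_Mapping.lookup \<alpha> (sw i j k) \<noteq> 0}"
    then have "sw i j k \<in> Poly_Mapping.keys \<alpha>" by (simp add: in_keys_iff)
    moreover have "k = sw i j (sw i j k)" by (auto simp: sw_def)
    ultimately show "k \<in> sw i j ` Poly_Mapping.keys \<alpha>" by blast
  qed
  then have "finite {k. Poly_Mapping.lookup \<alpha> (sw i j k) \<noteq> 0}"
    by (rule finite_subset) simp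
  then show ?thesis unfolding swap_exp_def sw_def by simp
qed

lemma swap_exp_add: "swap_exp i j (Poly_Mapping.single k 1 + \<alpha>) = Poly_Mapping.single (sw i j k) 1 + swap_exp i j \<alpha>"
  by (rule poly_mapping_eqI) (auto simp: lookup_swap_exp lookup_add lookup_single when_def sw_def)

lemma swap_exp_0: "swap_exp i j 0 = 0"
  by (rule poly_mapping_eqI) (simp add: lookup_swap_exp)

lemma Y_single: "Y k * Poly_Mapping.single \<alpha> c = Poly_Mapping.single (Poly_Mapping.single k 1 + \<alpha>) c"
  unfolding Y_def by (simp add: mult_single)

lemma swap_Y: "swap_var i j (Y k * h) = Y (sw i j k) * swap_var i j h"
proof (rule additive_eq[where L="\<lambda>h. swap_var i j (Y k * h)" and M="\<lambda>h. Y (sw i j k) * swap_var i j h"])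
  fix \<alpha> :: "nat \<Rightarrow>\<^sub>0 nat" and c :: real
  show "swap_var i j (Y k * Poly_Mapping.single \<alpha> c) = Y (sw i j k) * swap_var i j (Poly_Mapping.single \<alpha> c)"
    unfolding Y_single swap_single swap_exp_add ..
qed (simp_all add: distrib_left swap_add)

lemma pderiv_Y: "k \<noteq> j \<Longrightarrow> pderiv_var j (Y k * h) = Y k * pderiv_var j h"
proof (rule additive_eq[where L="\<lambda>h. pderiv_var j (Y k * h)" and M="\<lambda>h. Y k * pderiv_var j h"])
  fix \<alpha> :: "nat \<Rightarrow>\<^sub>0 nat" and c :: real assume kj: "k \<noteq> j"
  have "Poly_Mapping.single k 1 + \<alpha> - Poly_Mapping.single j 1 = Poly_Mapping.single k 1 + (\<alpha> - Poly_Mapping.single j 1)"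
    using kj by (intro poly_mapping_eqI) (auto simp: lookup_add lookup_minus lookup_single when_def)
  then show "pderiv_var j (Y k * Poly_Mapping.single \<alpha> c) = Y k * pderiv_var j (Poly_Mapping.single \<alpha> c)"
    using kj by (simp add: Y_single pderiv_single lookup_add lookup_single when_def)
qed (simp_all add: distrib_left pderiv_add)

lemma swap_const: "swap_var i j (const c) = const c"
  unfolding const_def by (simp add: swap_single swap_exp_0)

lemma swap_zero: "swap_var i j 0 = 0"
  using swap_add[of i j 0 0] by simp

lemma sw_simps: "sw i j i = j" "sw i j j = i" "k \<noteq> i \<Longrightarrow> k \<noteq> j \<Longrightarrow> sw i j k = k"
  by (auto simp: sw_def)

definition DE :: "nat \<Rightarrow> nat \<Rightarrow> mpoly \<Rightarrow> bool" where
  "DE i j h \<longleftrightarrow> (\<exists>g. (Y j - Y i) * g = h - swap_var i j h)"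

lemma DE_Y: "DE i j h \<Longrightarrow> DE i j (Y k * h)"
proof -
  assume "DE i j h"
  then obtain g where g: "(Y j - Y i) * g = h - swap_var i j h" unfolding DE_def by blast
  show ?thesis
  proof (cases "k = i")
    case True
    have "(Y j - Y i) * (Y i * g - swap_var i j h) = Y i * ((Y j - Y i) * g) - (Y j - Y i) * swap_var i j h"
      by (simp add: algebra_simps)
    also have "\<dots> = Y i * h - Y j * swap_var i j h" unfolding g by (simp add: algebra_simps)
    finally have "(Y j - Y i) * (Y i * g - swap_var i j h) = Y i * h - Y j * swap_var i j h" .
    then show ?thesis unfolding DE_def using True swap_Y[of i j k h] by (auto simp: sw_simps)
  next
    case ki: False
    show ?thesis
    proof (cases "k = j")
      case True
      have "(Y j - Y i) * (Y j * g + swap_var i j h) = Y j * ((Y j - Y i) * g) + (Y j - Y i) * swap_var i j h"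
        by (simp add: algebra_simps)
      also have "\<dots> = Y j * h - Y i * swap_var i j h" unfolding g by (simp add: algebra_simps)
      finally have "(Y j - Y i) * (Y j * g + swap_var i j h) = Y j * h - Y i * swap_var i j h" .
      then show ?thesis unfolding DE_def using True swap_Y[of i j k h] by (auto simp: sw_simps)
    next
      case False
      have "(Y j - Y i) * (Y k * g) = Y k * ((Y j - Y i) * g)" by (simp add: algebra_simps)
      then have "(Y j - Y i) * (Y k * g) = Y k * h - Y k * swap_var i j h"
        unfolding g by (simp add: algebra_simps)
      then show ?thesis unfolding DE_def using False ki swap_Y[of i j k h] by (auto simp: sw_simps)
    qed
  qed
qed

lemma DE_add: "DE i j f \<Longrightarrow> DE i j g \<Longrightarrow> DE i j (f + g)"
proof -
  assume "DE i j f" "DE i j g"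
  then obtain a b where "(Y j - Y i) * a = f - swap_var i j f" "(Y j - Y i) * b = g - swap_var i j g"
    unfolding DE_def by blast
  then have "(Y j - Y i) * (a + b) = (f + g) - swap_var i j (f + g)"
    by (simp add: distrib_left swap_add)
  then show ?thesis unfolding DE_def by blast
qed

lemma Y_pow: "Y k ^ n = Poly_Mapping.single (Poly_Mapping.single k n) 1"
proof (induction n)
  case 0 then show ?case by simp
next
  case (Suc n)
  have "Y k ^ Suc n = Y k * Poly_Mapping.single (Poly_Mapping.single k n) 1" by (simp add: Suc)
  also have "\<dots> = Poly_Mapping.single (Poly_Mapping.single k (Suc n)) 1"
    unfolding Y_single by (simp add: single_add[symmetric])
  finally show ?case .
qed

lemma DE_single: "DE i j (Poly_Mapping.single \<alpha> c)"
proof (induction \<alpha> rule: pm_induct)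
  case 1
  show ?case unfolding DE_def using swap_const[of i j c] by (auto simp: const_def)
next
  case (2 k n \<beta>)
  have eq: "Poly_Mapping.single (Poly_Mapping.single k n + \<beta>) c = Y k ^ n * Poly_Mapping.single \<beta> c"
    by (simp add: Y_pow mult_single)
  have "DE i j (Y k ^ m * Poly_Mapping.single \<beta> c)" for m
    by (induction m) (simp_all add: 2 DE_Y mult.assoc)
  then show ?case using eq by simp
qed

lemma DE_all: "DE i j h"
proof (induction h rule: pm_induct)
  case 1 then show ?case unfolding DE_def by (auto simp: swap_zero)
next
  case (2 a b f) then show ?case by (simp add: DE_add DE_single)
qed

lemma Yne: "i \<noteq> j \<Longrightarrow> Y j - Y i \<noteq> 0"
proof
  assume ij: "i \<noteq> j" and "Y j - Y i = 0"
  then have "Poly_Mapping.lookup (Y j - Y i) (Poly_Mapping.single j 1) = 0" by simp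
  moreover have "Poly_Mapping.single i (1::nat) \<noteq> Poly_Mapping.single j 1"
  proof
    assume "Poly_Mapping.single i (1::nat) = Poly_Mapping.single j 1"
    then have "Poly_Mapping.lookup (Poly_Mapping.single i (1::nat)) i = Poly_Mapping.lookup (Poly_Mapping.single j 1) i" by simp
    then show False using ij by (simp add: lookup_single)
  qed
  ultimately show False unfolding Y_def by (simp add: lookup_minus lookup_single when_def)
qed

lemma dd_char: "i \<noteq> j \<Longrightarrow> (Y j - Y i) * g = h - swap_var i j h \<Longrightarrow> divdiff i j h = g"
  unfolding divdiff_def
  by (rule the_equality) (metis Yne mult_left_cancel)+

lemma dd_eq: "i \<noteq> j \<Longrightarrow> (Y j - Y i) * divdiff i j h = h - swap_var i j h"
  using DE_all[of i j h] dd_char unfolding DE_def by metis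

lemma dd_Y: "i \<noteq> j \<Longrightarrow> k \<noteq> j \<Longrightarrow>
  divdiff i j (Y k * h) = Y k * divdiff i j h - (if i = k then swap_var i j h else 0)"
proof (rule dd_char)
  assume ij: "i \<noteq> j" and kj: "k \<noteq> j"
  note g = dd_eq[OF ij, of h]
  show "(Y j - Y i) * (Y k * divdiff i j h - (if i = k then swap_var i j h else 0)) = Y k * h - swap_var i j (Y k * h)"
  proof (cases "i = k")
    case True
    have "(Y j - Y i) * (Y i * divdiff i j h - swap_var i j h) = Y i * ((Y j - Y i) * divdiff i j h) - (Y j - Y i) * swap_var i j h"
      by (simp add: algebra_simps)
    also have "\<dots> = Y i * h - Y j * swap_var i j h" unfolding g by (simp add: algebra_simps)
    finally have "(Y j - Y i) * (Y i * divdiff i j h - swap_var i j h) = Y i * h - Y j * swap_var i j h" .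
    then show ?thesis using True swap_Y[of i j k h] by (auto simp: sw_simps)
  next
    case False
    have "(Y j - Y i) * (Y k * divdiff i j h) = Y k * ((Y j - Y i) * divdiff i j h)" by (simp add: algebra_simps)
    then have "(Y j - Y i) * (Y k * divdiff i j h) = Y k * h - Y k * swap_var i j h"
      unfolding g by (simp add: algebra_simps)
    then show ?thesis using False kj swap_Y[of i j k h] by (auto simp: sw_simps)
  qed
qed

lemma Dop_Y:
  assumes kj: "k \<noteq> j" and kr: "k \<in> {1..r}"
  shows "Dop a r j (Y k * h) = Y k * Dop a r j h - const (a / 2) * swap_var k j h"
proof -
  let ?S = "{1..r} - {j}"
  have "(\<Sum>i\<in>?S. divdiff i j (Y k * h)) = (\<Sum>i\<in>?S. Y k * divdiff i j h - (if i = k then swap_var i j h else 0))"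
    by (rule sum.cong) (auto simp: dd_Y kj)
  also have "\<dots> = Y k * (\<Sum>i\<in>?S. divdiff i j h) - swap_var k j h"
    using kj kr by (simp add: sum_subtractf sum_distrib_left)
  finally have s: "(\<Sum>i\<in>?S. divdiff i j (Y k * h)) = Y k * (\<Sum>i\<in>?S. divdiff i j h) - swap_var k j h" .
  show ?thesis unfolding Dop_def pderiv_Y[OF kj, of h] s
    by (simp add: algebra_simps)
qed

lemma swap_prod: "finite K \<Longrightarrow> i \<notin> K \<Longrightarrow> j \<notin> K \<Longrightarrow>
  swap_var i j ((\<Prod>k\<in>K. Y k) * g) = (\<Prod>k\<in>K. Y k) * swap_var i j g"
proof (induction K rule: finite_induct)
  case empty then show ?case by simp
next
  case (insert k K)
  have "swap_var i j ((\<Prod>k\<in>insert k K. Y k) * g) = swap_var i j (Y k * ((\<Prod>k\<in>K. Y k) * g))"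
    using insert by (simp add: mult.assoc)
  also have "\<dots> = Y k * swap_var i j ((\<Prod>k\<in>K. Y k) * g)"
    using insert by (simp add: swap_Y sw_simps)
  also have "\<dots> = (\<Prod>k\<in>insert k K. Y k) * swap_var i j g"
    using insert by (simp add: mult.assoc)
  finally show ?case .
qed

lemma key:
  assumes "finite K" "K \<subseteq> {1..r}" "j \<notin> K"
  shows "Dop a r j (Y j * (\<Prod>k\<in>K. Y k) * f) =
     (\<Prod>k\<in>K. Y k) * (Dop a r j (Y j * f) - const (a / 2) * (\<Sum>i\<in>K. swap_var i j f))"
  using assms
proof (induction K rule: finite_induct)
  case empty then show ?case by simp
next
  case (insert k K)
  let ?P = "\<Prod>k\<in>K. Y k"
  have kj: "k \<noteq> j" using insert by auto
  have kr: "k \<in> {1..r}" using insert by auto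
  have "Dop a r j (Y j * (\<Prod>k\<in>insert k K. Y k) * f) = Dop a r j (Y k * (Y j * ?P * f))"
    using insert by (simp add: algebra_simps)
  also have "\<dots> = Y k * Dop a r j (Y j * ?P * f) - const (a / 2) * swap_var k j (Y j * ?P * f)"
    by (rule Dop_Y[OF kj kr])
  also have "swap_var k j (Y j * ?P * f) = Y k * ?P * swap_var k j f"
  proof -
    have "swap_var k j (Y j * ?P * f) = Y k * swap_var k j (?P * f)"
      by (simp add: mult.assoc swap_Y sw_simps)
    also have "\<dots> = Y k * ?P * swap_var k j f"
      using insert by (simp add: swap_prod mult.assoc)
    finally show ?thesis .
  qed
  also have "Dop a r j (Y j * ?P * f) = ?P * (Dop a r j (Y j * f) - const (a / 2) * (\<Sum>i\<in>K. swap_var i j f))"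
    using insert by auto
  finally show ?case using insert by (simp add: algebra_simps)
qed

lemma gen: "m \<le> r \<Longrightarrow> comp_ops m (Dop a r) ((\<Prod>i\<in>{1..m}. Y i) * f) = comp_ops m (Uop a r) f"
proof (induction m arbitrary: f)
  case 0 then show ?case by (simp add: comp_ops_0)
next
  case (Suc m)
  have K: "{1..<Suc m} = {1..m}" by auto
  have I: "{1..Suc m} = insert (Suc m) {1..<Suc m}" by auto
  have pe: "(\<Prod>i\<in>{1..Suc m}. Y i) * f = Y (Suc m) * (\<Prod>i\<in>{1..<Suc m}. Y i) * f"
    unfolding I by simp
 have "Dop a r (Suc m) (Y (Suc m) * (\<Prod>i\<in>{1..<Suc m}. Y i) * f) = (\<Prod>i\<in>{1..<Suc m}. Y i) * Uop a r (Suc m) f"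
    unfolding Uop_def by (rule key) (use Suc.prems in auto)
  then have "Dop a r (Suc m) ((\<Prod>i\<in>{1..Suc m}. Y i) * f) = (\<Prod>i\<in>{1..<Suc m}. Y i) * Uop a r (Suc m) f"
    unfolding pe .
  then have "Dop a r (Suc m) ((\<Prod>i\<in>{1..Suc m}. Y i) * f) = (\<Prod>i\<in>{1..m}. Y i) * Uop a r (Suc m) f"
    unfolding K .
  then have "comp_ops (Suc m) (Dop a r) ((\<Prod>i\<in>{1..Suc m}. Y i) * f) = comp_ops m (Dop a r) ((\<Prod>i\<in>{1..m}. Y i) * Uop a r (Suc m) f)"
    unfolding comp_ops_Suc by simp
  also have "\<dots> = comp_ops m (Uop a r) (Uop a r (Suc m) f)"
    using Suc by simp
  also have "\<dots> = comp_ops (Suc m) (Uop a r) f"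
    unfolding comp_ops_Suc by simp
  finally show ?case .
qed

theorem lemma6p1:
  fixes a :: real and r :: nat and f :: mpoly
  assumes "r \<ge> 1"
    and "\<forall>\<alpha>\<in>Poly_Mapping.keys f. Poly_Mapping.keys \<alpha> \<subseteq> {1..r}"
  shows "comp_ops r (Dop a r) ((\<Prod>i\<in>{1..r}. Y i) * f) = comp_ops r (Uop a r) f"
  using gen[of r r a f] by simp

end
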